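(* Consider the packet spreading algorithm described in the context with any $N\ge 2$. For every iteration $k\in\{0,1,\dots,K-1\}$, letting $i=m_k$ be the source selected in iteration $k$, we have for every source $j\neq i$ $$\tilde Q_j^{k+1}=\frac{x_j^k+1}{K_j}-\frac{x_i^k}{K_i}.$$
   Context: Packet spreading algorithm: Let $N\ge 2$, let $K_1,\dots,K_N$ be positive integers and $K=\sum_{n=1}^N K_n$. The algorithm runs iterations $k=0,1,\dots,K-1$ and maintains deficit counters $B_n^k$, $1\le n\le N$, with $B_n^0=0$ for all $n$. In iteration $k$, define the quantums $Q_n^k=\frac{(1-B_n^k)K}{K_n}$; select a source $m_k\in\arg\min_{1\le n\le N} Q_n^k$ (ties broken arbitrarily); let $Q=Q_{m_k}^k$; set $B_n^{k+1}=B_n^k+Q\frac{K_n}{K}$ for $n\neq m_k$ and $B_{m_k}^{k+1}=0$; and set the $k$-th entry of the output pattern to $P(k)=m_k$. Normalized quantums: $\tilde Q_n^k=Q_n^k/K=(1-B_n^k)/K_n$. For $0\le k\le K-1$, $x_n^k$ denotes the number of indices $k'\in\{0,\dots,k\}$ with $m_{k'}=n$, i.e. the number of source-$n$ instances inserted into the pattern after iteration $k$. *)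

theory Defs
  imports Complex_Main
begin

text \<open>A run is described by its selection sequence m :: nat \<Rightarrow> nat (m k = m_k);
  deficit counters are determined by m.\<close>

definition total_K :: "nat \<Rightarrow> (nat \<Rightarrow> nat) \<Rightarrow> nat" where
  "total_K N Kn = (\<Sum>n=1..N. Kn n)"

fun defB :: "nat \<Rightarrow> (nat \<Rightarrow> nat) \<Rightarrow> (nat \<Rightarrow> nat) \<Rightarrow> nat \<Rightarrow> nat \<Rightarrow> real" where
  "defB N Kn m 0 n = 0"
| "defB N Kn m (Suc k) n =
     (if n = m k then 0
      else defB N Kn m k n
           + ((1 - defB N Kn m k (m k)) * real (total_K N Kn) / real (Kn (m k)))
             * real (Kn n) / real (total_K N Kn))"

definition quantum :: "nat \<Rightarrow> (nat \<Rightarrow> nat) \<Rightarrow> (nat \<Rightarrow> nat) \<Rightarrow> nat \<Rightarrow> nat \<Rightarrow> real" where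
  "quantum N Kn m k n = (1 - defB N Kn m k n) * real (total_K N Kn) / real (Kn n)"

definition nquantum :: "nat \<Rightarrow> (nat \<Rightarrow> nat) \<Rightarrow> (nat \<Rightarrow> nat) \<Rightarrow> nat \<Rightarrow> nat \<Rightarrow> real" where
  "nquantum N Kn m k n = quantum N Kn m k n / real (total_K N Kn)"

definition valid_run :: "nat \<Rightarrow> (nat \<Rightarrow> nat) \<Rightarrow> (nat \<Rightarrow> nat) \<Rightarrow> bool" where
  "valid_run N Kn m \<longleftrightarrow>
     (\<forall>k < total_K N Kn. m k \<in> {1..N} \<and>
        (\<forall>n \<in> {1..N}. quantum N Kn m k (m k) \<le> quantum N Kn m k n))"

definition count_x :: "(nat \<Rightarrow> nat) \<Rightarrow> nat \<Rightarrow> nat \<Rightarrow> nat" where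
  "count_x m n k = card {k' \<in> {0..k}. m k' = n}"

end

theory Submission
  imports Defs
begin

lemma nq_eq: "total_K N Kn > 0 \<Longrightarrow> nquantum N Kn m k n = (1 - defB N Kn m k n) / real (Kn n)"
  unfolding nquantum_def quantum_def by (cases "Kn n = 0") (simp_all add: field_simps)

lemma nq_step:
  assumes "total_K N Kn > 0" "Kn n > 0" "Kn (m k) > 0"
  shows "nquantum N Kn m (Suc k) n =
    (if n = m k then 1 / real (Kn n) else nquantum N Kn m k n - nquantum N Kn m k (m k))"
  using assms by (simp add: nq_eq field_simps)

lemma cx_0: "count_x m n 0 = (if m 0 = n then 1 else 0)"
proof -
  have "{k' \<in> {0..0}. m k' = n} = (if m 0 = n then {0} else {})" by auto
  then show ?thesis unfolding count_x_def by simp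
qed

lemma cx_Suc: "count_x m n (Suc k) = count_x m n k + (if m (Suc k) = n then 1 else 0)"
proof -
  have "{k' \<in> {0..Suc k}. m k' = n} = (if m (Suc k) = n then insert (Suc k) {k' \<in> {0..k}. m k' = n}
          else {k' \<in> {0..k}. m k' = n})" by (auto simp: le_Suc_eq)
  then show ?thesis unfolding count_x_def by auto
qed

lemma inv:
  assumes pos: "\<forall>n \<in> {1..N}. Kn n > 0"
    and v: "valid_run N Kn m"
    and "k < total_K N Kn"
  shows "\<forall>n\<in>{1..N}. nquantum N Kn m (Suc k) n
           = real (count_x m n k + 1) / real (Kn n) - real (count_x m (m k) k) / real (Kn (m k))"
  using assms(3)
proof (induction k)
  case 0
  then have K: "total_K N Kn > 0" by simp
  have m0: "m 0 \<in> {1..N}" using v 0 unfolding valid_run_def by blast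
  show ?case
  proof
    fix n assume n: "n \<in> {1..N}"
    have z: "nquantum N Kn m 0 n = 1 / real (Kn n)" for n using K by (simp add: nq_eq)
    show "nquantum N Kn m (Suc 0) n = real (count_x m n 0 + 1) / real (Kn n) - real (count_x m (m 0) 0) / real (Kn (m 0))"
      using nq_step[OF K, of n m 0] pos n m0 by (simp add: z cx_0)
  qed
next
  case (Suc k)
  then have K: "total_K N Kn > 0" by simp
  note IH = Suc.IH[OF Suc_lessD[OF Suc.prems]]
  have mk: "m (Suc k) \<in> {1..N}" using v Suc.prems unfolding valid_run_def by blast
  show ?case
  proof
    fix n assume n: "n \<in> {1..N}"
    have p1: "Kn n > 0" "Kn (m (Suc k)) > 0" using pos n mk by auto
    show "nquantum N Kn m (Suc (Suc k)) n = real (count_x m n (Suc k) + 1) / real (Kn n) - real (count_x m (m (Suc k)) (Suc k)) / real (Kn (m (Suc k)))"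
    proof (cases "n = m (Suc k)")
      case True
      then show ?thesis using nq_step[OF K, of n m "Suc k"] p1 by (simp add: field_simps)
    next
      case False
      have a: "nquantum N Kn m (Suc k) n = real (count_x m n k + 1) / real (Kn n) - real (count_x m (m k) k) / real (Kn (m k))"
        using IH n by blast
      have b: "nquantum N Kn m (Suc k) (m (Suc k)) = real (count_x m (m (Suc k)) k + 1) / real (Kn (m (Suc k))) - real (count_x m (m k) k) / real (Kn (m k))"
        using IH mk by blast
      show ?thesis using nq_step[OF K, of n m "Suc k"] False a b p1 by (simp add: cx_Suc field_simps)
    qed
  qed
qed

theorem mainTheorem4:
  fixes N :: nat and Kn :: "nat \<Rightarrow> nat" and m :: "nat \<Rightarrow> nat"
  assumes "N \<ge> 2"
    and "\<forall>n \<in> {1..N}. Kn n > 0"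
    and "valid_run N Kn m"
    and "k < total_K N Kn"
    and "j \<in> {1..N}" and "j \<noteq> m k"
  shows "nquantum N Kn m (Suc k) j
           = real (count_x m j k + 1) / real (Kn j) - real (count_x m (m k) k) / real (Kn (m k))"
  using inv[OF assms(2,3,4)] assms(5) by blast

end
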